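(* Let $\mathbf S=\langle S,+,0,\mathscr F\rangle$ be a semilattice with operators, and define $\eta$ on $\operatorname{Con}\mathbf S$ by $\eta(\theta)=\operatorname{con}_{\mathrm{SL}}(0/\theta)$, the semilattice congruence generated by collapsing the $0$-class of $\theta$ to $0$. Then $\eta$ satisfies, for all $x,y,z\in L=\operatorname{Con}\mathbf S$: (I1) $\eta(x)\le x$; (I2) $x\ge y$ implies $\eta(x)\ge\eta(y)$; (I3) $\eta^2(x)=\eta(x)$; (I4) $\eta(1)=1$; (I5) if $\eta(x)=u$ for all $x\in X\subseteq L$ then $\eta(\bigvee X)=u$; (I6) $\eta(x)\vee(y\wedge z)=(\eta(x)\vee y)\wedge(\eta(x)\vee z)$; (I7) the image $\eta(L)$ is the complete join subsemilattice of $L$ generated by $\eta(L)\cap L_c$, where $L_c$ is the set of compact elements of $L$.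
   Context: A semilattice with operators is a join semilattice $(S,+)$ with least element $0$ together with a set $\mathscr F$ of unary maps preserving $+$ and $0$; congruences are equivalence relations compatible with $+$ and all $f\in\mathscr F$. $0/\theta$ denotes the $0$-class of $\theta$. Explicitly, $x\,\eta(\theta)\,y$ iff $x+i=y+i$ for some $i\in 0/\theta$ (this relation is a congruence of $\mathbf S$). *)

theory Defs
  imports Main
begin

text \<open>A semilattice with operators: the join semilattice is the type 'a with
  sup as + and bot as 0; F is the set of operators (maps preserving sup and bot).\<close>

definition is_operator_set :: "('a::{semilattice_sup,order_bot} \<Rightarrow> 'a) set \<Rightarrow> bool" where
  "is_operator_set F \<longleftrightarrow>
     (\<forall>f\<in>F. (\<forall>a b. f (sup a b) = sup (f a) (f b)) \<and> f bot = bot)"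

definition Con :: "('a::{semilattice_sup,order_bot} \<Rightarrow> 'a) set \<Rightarrow> ('a \<times> 'a) set set" where
  "Con F = {\<theta>. equiv UNIV \<theta>
       \<and> (\<forall>a b c d. (a,b) \<in> \<theta> \<longrightarrow> (c,d) \<in> \<theta> \<longrightarrow> (sup a c, sup b d) \<in> \<theta>)
       \<and> (\<forall>f\<in>F. \<forall>a b. (a,b) \<in> \<theta> \<longrightarrow> (f a, f b) \<in> \<theta>)}"

text \<open>Join in the lattice Con S: the least congruence containing all members of X.
  Meet is intersection, order is inclusion, top is UNIV.\<close>
definition conJoin :: "('a::{semilattice_sup,order_bot} \<Rightarrow> 'a) set \<Rightarrow> ('a \<times> 'a) set set \<Rightarrow> ('a \<times> 'a) set" where
  "conJoin F X = \<Inter>{\<theta> \<in> Con F. \<Union>X \<subseteq> \<theta>}"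

definition con_compact :: "('a::{semilattice_sup,order_bot} \<Rightarrow> 'a) set \<Rightarrow> ('a \<times> 'a) set \<Rightarrow> bool" where
  "con_compact F \<theta> \<longleftrightarrow> \<theta> \<in> Con F \<and>
     (\<forall>X \<subseteq> Con F. \<theta> \<subseteq> conJoin F X \<longrightarrow> (\<exists>Y \<subseteq> X. finite Y \<and> \<theta> \<subseteq> conJoin F Y))"

definition zero_class :: "('a::{semilattice_sup,order_bot} \<times> 'a) set \<Rightarrow> 'a set" where
  "zero_class \<theta> = {i. (i, bot) \<in> \<theta>}"

text \<open>eta(theta) = con_SL(0/theta): x eta y iff x+i = y+i for some i in 0/theta.\<close>
definition eta :: "('a::{semilattice_sup,order_bot} \<times> 'a) set \<Rightarrow> ('a \<times> 'a) set" where
  "eta \<theta> = {(x,y). \<exists>i \<in> zero_class \<theta>. sup x i = sup y i}"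

end

theory Submission
  imports Defs
begin

lemma sup_bot_r [simp]: "sup (i::'a::{semilattice_sup,order_bot}) bot = i"
  by (simp add: sup_absorb1)
lemma sup_bot_l [simp]: "sup bot (i::'a::{semilattice_sup,order_bot}) = i"
  by (simp add: sup_absorb2)

lemma Con_refl: "\<theta> \<in> Con F \<Longrightarrow> (a,a) \<in> \<theta>"
  unfolding Con_def equiv_def refl_on_def by blast
lemma Con_sym: "\<theta> \<in> Con F \<Longrightarrow> (a,b) \<in> \<theta> \<Longrightarrow> (b,a) \<in> \<theta>"
  unfolding Con_def equiv_def sym_def by blast
lemma Con_trans: "\<theta> \<in> Con F \<Longrightarrow> (a,b) \<in> \<theta> \<Longrightarrow> (b,c) \<in> \<theta> \<Longrightarrow> (a,c) \<in> \<theta>"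
  unfolding Con_def equiv_def trans_def by blast
lemma Con_sup: "\<theta> \<in> Con F \<Longrightarrow> (a,b) \<in> \<theta> \<Longrightarrow> (c,d) \<in> \<theta> \<Longrightarrow> (sup a c, sup b d) \<in> \<theta>"
  unfolding Con_def by blast
lemma Con_op: "\<theta> \<in> Con F \<Longrightarrow> f \<in> F \<Longrightarrow> (a,b) \<in> \<theta> \<Longrightarrow> (f a, f b) \<in> \<theta>"
  unfolding Con_def by blast

lemma ConI:
  fixes \<theta> :: "('a::{semilattice_sup,order_bot} \<times> 'a) set"
  assumes "\<And>a. (a,a) \<in> \<theta>" "\<And>a b. (a,b) \<in> \<theta> \<Longrightarrow> (b,a) \<in> \<theta>"
    "\<And>a b c. (a,b) \<in> \<theta> \<Longrightarrow> (b,c) \<in> \<theta> \<Longrightarrow> (a,c) \<in> \<theta>"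
    "\<And>a b c d. (a,b) \<in> \<theta> \<Longrightarrow> (c,d) \<in> \<theta> \<Longrightarrow> (sup a c, sup b d) \<in> \<theta>"
    "\<And>f a b. f \<in> F \<Longrightarrow> (a,b) \<in> \<theta> \<Longrightarrow> (f a, f b) \<in> \<theta>"
  shows "\<theta> \<in> Con F"
proof -
  have "refl_on UNIV \<theta>" by (rule refl_onI) (rule assms(1))
  moreover have "sym \<theta>" by (rule symI) (rule assms(2))
  moreover have "trans \<theta>" by (rule transI) (rule assms(3))
  ultimately have "equiv UNIV \<theta>" by (simp add: equiv_def)
  then show ?thesis unfolding Con_def using assms(4,5) by blast
qed

lemma conJoin_in: "conJoin F X \<in> Con F"
  unfolding conJoin_def
  by (rule ConI) (auto intro: Con_refl Con_sym Con_trans Con_sup Con_op)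

lemma conJoin_upper: "\<Union>X \<subseteq> conJoin F X"
  by (auto simp: conJoin_def)
lemma conJoin_least: "\<theta> \<in> Con F \<Longrightarrow> \<Union>X \<subseteq> \<theta> \<Longrightarrow> conJoin F X \<subseteq> \<theta>"
  by (auto simp: conJoin_def)
lemma conJoin_eqI: "\<psi> \<in> Con F \<Longrightarrow> \<Union>X \<subseteq> \<psi> \<Longrightarrow> (\<And>\<theta>. \<theta> \<in> Con F \<Longrightarrow> \<Union>X \<subseteq> \<theta> \<Longrightarrow> \<psi> \<subseteq> \<theta>)
   \<Longrightarrow> conJoin F X = \<psi>"
  by (meson conJoin_in conJoin_least conJoin_upper subset_antisym)

lemma Con_Int: "y \<in> Con F \<Longrightarrow> z \<in> Con F \<Longrightarrow> y \<inter> z \<in> Con F"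
  by (rule ConI) (auto intro: Con_refl Con_sym Con_trans Con_sup Con_op)

lemma Id_Con: "(Id :: ('a::{semilattice_sup,order_bot} \<times> 'a) set) \<in> Con F"
  by (rule ConI) auto

lemma rtrancl_Con:
  fixes X :: "('a::{semilattice_sup,order_bot} \<times> 'a) set set"
  assumes X: "X \<subseteq> Con F" shows "(\<Union>X)\<^sup>* \<in> Con F"
proof (rule ConI)
  fix a b assume "(a,b) \<in> (\<Union>X)\<^sup>*"
  then show "(b,a) \<in> (\<Union>X)\<^sup>*"
  proof (induction rule: rtrancl_induct)
    case (step y z)
    then have "(z,y) \<in> \<Union>X" using X Con_sym by blast
    then show ?case using step converse_rtrancl_into_rtrancl by metis
  qed simp
next
  fix a b c d assume ab: "(a,b) \<in> (\<Union>X)\<^sup>*" and cd: "(c,d) \<in> (\<Union>X)\<^sup>*"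
  have 1: "(sup a c, sup b c) \<in> (\<Union>X)\<^sup>*" using ab
  proof (induction rule: rtrancl_induct)
    case (step y z)
    then obtain t where "t \<in> X" "(y,z) \<in> t" by blast
    then have "(sup y c, sup z c) \<in> t" using X Con_sup Con_refl by blast
    then show ?case using step \<open>t \<in> X\<close> by (meson UnionI rtrancl.rtrancl_into_rtrancl)
  qed simp
  have 2: "(sup b c, sup b d) \<in> (\<Union>X)\<^sup>*" using cd
  proof (induction rule: rtrancl_induct)
    case (step y z)
    then obtain t where "t \<in> X" "(y,z) \<in> t" by blast
    then have "(sup b y, sup b z) \<in> t" using X Con_sup Con_refl by blast
    then show ?case using step \<open>t \<in> X\<close> by (meson UnionI rtrancl.rtrancl_into_rtrancl)
  qed simp
  show "(sup a c, sup b d) \<in> (\<Union>X)\<^sup>*" using 1 2 by (rule rtrancl_trans)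
next
  fix f a b assume f: "f \<in> F" and ab: "(a,b) \<in> (\<Union>X)\<^sup>*"
  from ab show "(f a, f b) \<in> (\<Union>X)\<^sup>*"
  proof (induction rule: rtrancl_induct)
    case (step y z)
    then obtain t where "t \<in> X" "(y,z) \<in> t" by blast
    then have "(f y, f z) \<in> t" using X Con_op f by blast
    then show ?case using step \<open>t \<in> X\<close> by (meson UnionI rtrancl.rtrancl_into_rtrancl)
  qed simp
qed (auto intro: rtrancl_trans)

lemma rtrancl_sub_Con: "\<theta> \<in> Con F \<Longrightarrow> R \<subseteq> \<theta> \<Longrightarrow> R\<^sup>* \<subseteq> \<theta>"
proof
  fix p assume th: "\<theta> \<in> Con F" and R: "R \<subseteq> \<theta>" and "p \<in> R\<^sup>*"
  then obtain a b where p: "p = (a,b)" "(a,b) \<in> R\<^sup>*" by (cases p) auto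
  from p(2) have "(a,b) \<in> \<theta>"
    by (induction rule: rtrancl_induct) (use th R Con_refl Con_trans in blast)+
  then show "p \<in> \<theta>" using p by simp
qed

lemma conJoin_rtrancl: "X \<subseteq> Con F \<Longrightarrow> conJoin F X = (\<Union>X)\<^sup>*"
  by (rule conJoin_eqI) (auto simp: rtrancl_Con rtrancl_sub_Con)

lemma zc_down: "\<theta> \<in> Con F \<Longrightarrow> (j,bot) \<in> \<theta> \<Longrightarrow> i \<le> j \<Longrightarrow> (i,bot) \<in> \<theta>"
proof -
  assume th: "\<theta> \<in> Con F" and j: "(j,bot) \<in> \<theta>" and ij: "i \<le> j"
  have "(sup i bot, sup i j) \<in> \<theta>" using th j Con_sup Con_refl Con_sym by blast
  then have "(i, j) \<in> \<theta>" using ij by (simp add: sup_absorb2)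
  then show ?thesis using th j Con_trans by blast
qed

lemma yI_Con:
  fixes F :: "('a::{semilattice_sup,order_bot} \<Rightarrow> 'a) set"
  assumes ops: "is_operator_set F" and x: "x \<in> Con F" and y: "y \<in> Con F"
  shows "{(a,b). \<exists>i\<in>zero_class x. (sup a i, sup b i) \<in> y} \<in> Con F"
proof (rule ConI)
  fix a show "(a,a) \<in> {(a,b). \<exists>i\<in>zero_class x. (sup a i, sup b i) \<in> y}"
    using x y Con_refl by (fastforce simp: zero_class_def)
next
  fix a b assume "(a,b) \<in> {(a,b). \<exists>i\<in>zero_class x. (sup a i, sup b i) \<in> y}"
  then show "(b,a) \<in> {(a,b). \<exists>i\<in>zero_class x. (sup a i, sup b i) \<in> y}"
    using y Con_sym by blast
next
  fix a b c assume "(a,b) \<in> {(a,b). \<exists>i\<in>zero_class x. (sup a i, sup b i) \<in> y}"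
    "(b,c) \<in> {(a,b). \<exists>i\<in>zero_class x. (sup a i, sup b i) \<in> y}"
  then obtain i j where i: "i \<in> zero_class x" "(sup a i, sup b i) \<in> y"
    and j: "j \<in> zero_class x" "(sup b j, sup c j) \<in> y" by blast
  have k: "sup i j \<in> zero_class x" using i j x Con_sup[of x F i bot j bot]
    by (simp add: zero_class_def)
  have 1: "(sup a (sup i j), sup b (sup i j)) \<in> y"
    using Con_sup[OF y i(2) Con_refl[OF y, of j]] by (simp add: ac_simps)
  have 2: "(sup b (sup i j), sup c (sup i j)) \<in> y"
    using Con_sup[OF y j(2) Con_refl[OF y, of i]] by (simp add: ac_simps)
  show "(a,c) \<in> {(a,b). \<exists>i\<in>zero_class x. (sup a i, sup b i) \<in> y}"
    using k 1 2 Con_trans[OF y] by blast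
next
  fix a b c d assume "(a,b) \<in> {(a,b). \<exists>i\<in>zero_class x. (sup a i, sup b i) \<in> y}"
    "(c,d) \<in> {(a,b). \<exists>i\<in>zero_class x. (sup a i, sup b i) \<in> y}"
  then obtain i j where i: "i \<in> zero_class x" "(sup a i, sup b i) \<in> y"
    and j: "j \<in> zero_class x" "(sup c j, sup d j) \<in> y" by blast
  have k: "sup i j \<in> zero_class x" using i j x Con_sup[of x F i bot j bot]
    by (simp add: zero_class_def)
  have 1: "(sup (sup a c) (sup i j), sup (sup b d) (sup i j)) \<in> y"
    using Con_sup[OF y i(2) j(2)] by (simp add: ac_simps)
  show "(sup a c, sup b d) \<in> {(a,b). \<exists>i\<in>zero_class x. (sup a i, sup b i) \<in> y}"
    using k 1 by blast
next
  fix f a b assume f: "f \<in> F" and "(a,b) \<in> {(a,b). \<exists>i\<in>zero_class x. (sup a i, sup b i) \<in> y}"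
  then obtain i where i: "i \<in> zero_class x" "(sup a i, sup b i) \<in> y" by blast
  have fs: "\<And>u v. f (sup u v) = sup (f u) (f v)" "f bot = bot"
    using ops f by (auto simp: is_operator_set_def)
  have "f i \<in> zero_class x" using Con_op[OF x f, of i bot] i(1) fs(2)
    by (simp add: zero_class_def)
  moreover have "(sup (f a) (f i), sup (f b) (f i)) \<in> y"
    using Con_op[OF y f i(2)] fs(1) by simp
  ultimately show "(f a, f b) \<in> {(a,b). \<exists>i\<in>zero_class x. (sup a i, sup b i) \<in> y}"
    by blast
qed

lemma eta_alt: "eta x = {(a,b). \<exists>i\<in>zero_class x. (sup a i, sup b i) \<in> Id}"
  by (auto simp: eta_def)

lemma eta_Con: "is_operator_set F \<Longrightarrow> x \<in> Con F \<Longrightarrow> eta x \<in> Con F"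
  unfolding eta_alt by (rule yI_Con) (auto simp: Id_Con)

lemma join_eta:
  fixes F :: "('a::{semilattice_sup,order_bot} \<Rightarrow> 'a) set"
  assumes ops: "is_operator_set F" and x: "x \<in> Con F" and y: "y \<in> Con F"
  shows "conJoin F {eta x, y} = {(a,b). \<exists>i\<in>zero_class x. (sup a i, sup b i) \<in> y}"
proof (rule conJoin_eqI)
  show "{(a,b). \<exists>i\<in>zero_class x. (sup a i, sup b i) \<in> y} \<in> Con F"
    by (rule yI_Con[OF ops x y])
  have "bot \<in> zero_class x" using x Con_refl by (auto simp: zero_class_def)
  have y0: "y \<subseteq> {(a,b). \<exists>i\<in>zero_class x. (sup a i, sup b i) \<in> y}"
  proof
    fix p assume "p \<in> y"
    moreover obtain a b where p: "p = (a,b)" by (cases p)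
    ultimately have "(sup a bot, sup b bot) \<in> y" by simp
    then show "p \<in> {(a,b). \<exists>i\<in>zero_class x. (sup a i, sup b i) \<in> y}"
      using \<open>bot \<in> zero_class x\<close> p by blast
  qed
  have e0: "eta x \<subseteq> {(a,b). \<exists>i\<in>zero_class x. (sup a i, sup b i) \<in> y}"
  proof
    fix p assume "p \<in> eta x"
    then obtain a b i where i: "p = (a,b)" "i \<in> zero_class x" "sup a i = sup b i"
      by (auto simp: eta_def)
    then have "(sup a i, sup b i) \<in> y" using Con_refl[OF y] by metis
    then show "p \<in> {(a,b). \<exists>i\<in>zero_class x. (sup a i, sup b i) \<in> y}" using i by blast
  qed
  show "\<Union>{eta x, y} \<subseteq> {(a,b). \<exists>i\<in>zero_class x. (sup a i, sup b i) \<in> y}"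
    unfolding Union_insert Union_empty Un_empty_right using e0 y0 by (rule Un_least)
next
  fix \<theta> assume th: "\<theta> \<in> Con F" and sub: "\<Union>{eta x, y} \<subseteq> \<theta>"
  show "{(a,b). \<exists>i\<in>zero_class x. (sup a i, sup b i) \<in> y} \<subseteq> \<theta>"
  proof safe
    fix a b i assume i: "i \<in> zero_class x" "(sup a i, sup b i) \<in> y"
    have h1: "(a, sup a i) \<in> eta x"
      by (auto simp: eta_def sup_assoc intro!: bexI[OF _ i(1)])
    have h3: "(sup b i, b) \<in> eta x"
      by (auto simp: eta_def sup_assoc intro!: bexI[OF _ i(1)])
    have s1: "eta x \<subseteq> \<theta>" and s2: "y \<subseteq> \<theta>" using sub by auto
    show "(a,b) \<in> \<theta>"
      by (rule Con_trans[OF th Con_trans[OF th subsetD[OF s1 h1] subsetD[OF s2 i(2)]] subsetD[OF s1 h3]])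
  qed
qed

lemma zc_eta: "x \<in> Con F \<Longrightarrow> zero_class (eta x) = zero_class x"
proof
  assume x: "x \<in> Con F"
  show "zero_class (eta x) \<subseteq> zero_class x"
  proof
    fix a assume "a \<in> zero_class (eta x)"
    then obtain i where i: "(i,bot) \<in> x" "sup a i = i" by (auto simp: zero_class_def eta_def)
    then have "a \<le> i" by (simp add: le_iff_sup)
    then show "a \<in> zero_class x" using zc_down[OF x i(1)] by (simp add: zero_class_def)
  qed
  show "zero_class x \<subseteq> zero_class (eta x)"
    by (auto simp: zero_class_def eta_def)
qed

lemma eta_zc: "zero_class x = zero_class y \<Longrightarrow> eta x = eta y"
  by (simp add: eta_def)

lemma eta_le: "x \<in> Con F \<Longrightarrow> eta x \<subseteq> x"
proof safe
  fix a b assume x: "x \<in> Con F" and "(a,b) \<in> eta x"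
  then obtain i where i: "(i,bot) \<in> x" "sup a i = sup b i" by (auto simp: eta_def zero_class_def)
  have "(sup a bot, sup a i) \<in> x" using x i Con_sup Con_refl Con_sym by blast
  moreover have "(sup b i, sup b bot) \<in> x" using x i Con_sup Con_refl by blast
  ultimately show "(a,b) \<in> x" using i x Con_trans by auto
qed

lemma eta_mono: "y \<subseteq> x \<Longrightarrow> eta y \<subseteq> eta x"
  by (auto simp: eta_def zero_class_def)

lemma rtrancl_finite: "(a,b) \<in> (\<Union>X)\<^sup>* \<Longrightarrow> \<exists>Y\<subseteq>X. finite Y \<and> (a,b) \<in> (\<Union>Y)\<^sup>*"
proof (induction rule: rtrancl_induct)
  case base then show ?case by auto
next
  case (step y z)
  then obtain Y where Y: "Y \<subseteq> X" "finite Y" "(a,y) \<in> (\<Union>Y)\<^sup>*" by blast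
  from step obtain t where t: "t \<in> X" "(y,z) \<in> t" by blast
  have UY: "\<Union>Y \<subseteq> \<Union>(insert t Y)" by blast
  have "(a,y) \<in> (\<Union>(insert t Y))\<^sup>*" by (rule subsetD[OF rtrancl_mono[OF UY] Y(3)])
  then have az: "(a,z) \<in> (\<Union>(insert t Y))\<^sup>*" using t by (meson UnionI insertI1 rtrancl.rtrancl_into_rtrancl)
  have "insert t Y \<subseteq> X" "finite (insert t Y)" using Y t by auto
  then show ?case using az by blast
qed

lemma Cg_eta_lem:
  fixes F :: "('a::{semilattice_sup,order_bot} \<Rightarrow> 'a) set"
  assumes ops: "is_operator_set F"
  shows "eta (conJoin F {{(i,bot)}}) = conJoin F {{(i,bot)}}"
proof -
  let ?C = "conJoin F {{(i,bot)}}"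
  have C: "?C \<in> Con F" by (rule conJoin_in)
  have iC: "(i,bot) \<in> ?C" using conJoin_upper[of "{{(i,bot)}}" F] by blast
  have zi: "i \<in> zero_class ?C" unfolding zero_class_def using iC by (rule CollectI)
  have eq: "sup i i = sup bot i" by simp
  have ib: "(i,bot) \<in> eta ?C" unfolding eta_def mem_Collect_eq case_prod_conv
    by (rule bexI[where x=i, OF _ zi]) (rule eq)
  have "\<Union>{{(i,bot)}} \<subseteq> eta ?C" using ib by simp
  then have h1: "?C \<subseteq> eta ?C" by (rule conJoin_least[OF eta_Con[OF ops C]])
  have h2: "eta ?C \<subseteq> ?C" by (rule eta_le[OF C])
  show ?thesis by (rule subset_antisym[OF h2 h1])
qed

lemma L4: "eta (UNIV::('a::{semilattice_sup,order_bot} \<times> 'a) set) = UNIV"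
proof -
  have "(a,b) \<in> eta UNIV" for a b :: 'a
  proof -
    have "sup a (sup a b) = sup b (sup a b)" by (simp add: sup.left_idem sup_left_commute)
    then show ?thesis unfolding eta_def zero_class_def by blast
  qed
  then show ?thesis by auto
qed

lemma L3: "\<forall>x \<in> Con F. eta (eta x) = eta x"
  using zc_eta eta_zc by blast

lemma L5:
  fixes F :: "('a::{semilattice_sup,order_bot} \<Rightarrow> 'a) set"
  assumes ops: "is_operator_set F"
  shows "\<forall>X u. X \<subseteq> Con F \<longrightarrow> X \<noteq> {} \<longrightarrow> (\<forall>x \<in> X. eta x = u) \<longrightarrow> eta (conJoin F X) = u"
proof (intro allI impI)
  fix X u assume X: "X \<subseteq> Con F" and ne: "X \<noteq> {}" and eu: "\<forall>x \<in> X. eta x = u"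
  obtain x0 where x0: "x0 \<in> X" using ne by blast
  have zsame: "\<And>t. t \<in> X \<Longrightarrow> zero_class t = zero_class x0"
  proof -
    fix t assume t: "t \<in> X"
    have "zero_class t = zero_class (eta t)" using zc_eta X t by (metis subsetD)
    also have "\<dots> = zero_class (eta x0)" using eu t x0 by simp
    also have "\<dots> = zero_class x0" using zc_eta X x0 by (metis subsetD)
    finally show "zero_class t = zero_class x0" .
  qed
  have J: "conJoin F X = (\<Union>X)\<^sup>*" using conJoin_rtrancl X by blast
  have "zero_class (conJoin F X) = zero_class x0"
  proof
    show "zero_class x0 \<subseteq> zero_class (conJoin F X)"
      using conJoin_upper[of X F] x0 by (auto simp: zero_class_def)
  next
    show "zero_class (conJoin F X) \<subseteq> zero_class x0"
    proof
      fix a assume "a \<in> zero_class (conJoin F X)"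
      then have "(a, bot) \<in> (\<Union>X)\<^sup>*" using J by (simp add: zero_class_def)
      then have "(a, bot) \<in> x0"
      proof (induction rule: converse_rtrancl_induct)
        case base then show ?case using X x0 Con_refl by blast
      next
        case (step y z)
        then obtain t where t: "t \<in> X" "(y,z) \<in> t" by blast
        have "(z,bot) \<in> t" using step(3) zsame[OF t(1)] unfolding zero_class_def by blast
        then have "(y,bot) \<in> t" using t X Con_trans by blast
        then show ?case using zsame[OF t(1)] unfolding zero_class_def by blast
      qed
      then show "a \<in> zero_class x0" by (simp add: zero_class_def)
    qed
  qed
  then have "eta (conJoin F X) = eta x0" by (rule eta_zc)
  then show "eta (conJoin F X) = u" using eu x0 by simp
qed

lemma L6:
  fixes F :: "('a::{semilattice_sup,order_bot} \<Rightarrow> 'a) set"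
  assumes ops: "is_operator_set F"
  shows "\<forall>x \<in> Con F. \<forall>y \<in> Con F. \<forall>z \<in> Con F.
       conJoin F {eta x, y \<inter> z} = conJoin F {eta x, y} \<inter> conJoin F {eta x, z}"
proof (intro ballI)
  fix x y z assume x: "x \<in> Con F" and y: "y \<in> Con F" and z: "z \<in> Con F"
  show "conJoin F {eta x, y \<inter> z} = conJoin F {eta x, y} \<inter> conJoin F {eta x, z}"
    unfolding join_eta[OF ops x y] join_eta[OF ops x z] join_eta[OF ops x Con_Int[OF y z]]
  proof
    show "{(a,b). \<exists>i\<in>zero_class x. (sup a i, sup b i) \<in> y \<inter> z}
      \<subseteq> {(a,b). \<exists>i\<in>zero_class x. (sup a i, sup b i) \<in> y} \<inter> {(a,b). \<exists>i\<in>zero_class x. (sup a i, sup b i) \<in> z}"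
    proof
      fix p assume "p \<in> {(a,b). \<exists>i\<in>zero_class x. (sup a i, sup b i) \<in> y \<inter> z}"
      then obtain a b i where p: "p = (a,b)" "i \<in> zero_class x" "(sup a i, sup b i) \<in> y"
         "(sup a i, sup b i) \<in> z" by blast
      then show "p \<in> {(a,b). \<exists>i\<in>zero_class x. (sup a i, sup b i) \<in> y} \<inter> {(a,b). \<exists>i\<in>zero_class x. (sup a i, sup b i) \<in> z}"
        by blast
    qed
    show "{(a,b). \<exists>i\<in>zero_class x. (sup a i, sup b i) \<in> y} \<inter> {(a,b). \<exists>i\<in>zero_class x. (sup a i, sup b i) \<in> z}
      \<subseteq> {(a,b). \<exists>i\<in>zero_class x. (sup a i, sup b i) \<in> y \<inter> z}"
    proof
      fix p assume "p \<in> {(a,b). \<exists>i\<in>zero_class x. (sup a i, sup b i) \<in> y} \<inter> {(a,b). \<exists>i\<in>zero_class x. (sup a i, sup b i) \<in> z}"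
      then obtain a b i j where p: "p = (a,b)" and i: "i \<in> zero_class x" "(sup a i, sup b i) \<in> y"
        and j: "j \<in> zero_class x" "(sup a j, sup b j) \<in> z" by blast
      have k: "sup i j \<in> zero_class x" using i j x Con_sup[of x F i bot j bot]
        by (simp add: zero_class_def)
      have 1: "(sup a (sup i j), sup b (sup i j)) \<in> y"
        using Con_sup[OF y i(2) Con_refl[OF y, of j]] by (simp add: ac_simps)
      have 2: "(sup a (sup i j), sup b (sup i j)) \<in> z"
        using Con_sup[OF z j(2) Con_refl[OF z, of i]] by (simp add: ac_simps)
      show "p \<in> {(a,b). \<exists>i\<in>zero_class x. (sup a i, sup b i) \<in> y \<inter> z}" using p k 1 2 by blast
    qed
  qed
qed

lemma L7:
  fixes F :: "('a::{semilattice_sup,order_bot} \<Rightarrow> 'a) set"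
  assumes ops: "is_operator_set F"
  shows "eta ` Con F = {conJoin F Y | Y. Y \<subseteq> eta ` Con F \<inter> {\<theta>. con_compact F \<theta>}}"
proof safe
  fix x assume x: "x \<in> Con F"
  define Cg where "Cg i = conJoin F {{(i,bot)}}" for i
  have CgC: "Cg i \<in> Con F" for i unfolding Cg_def by (rule conJoin_in)
  have Cgi: "(i,bot) \<in> Cg i" for i using conJoin_upper[of "{{(i,bot)}}" F] unfolding Cg_def by auto
  have Cg_eta: "eta (Cg i) = Cg i" for i unfolding Cg_def by (rule Cg_eta_lem[OF ops])
  have Cg_comp: "con_compact F (Cg i)" for i
    unfolding con_compact_def
  proof (intro conjI CgC allI impI)
    fix X assume X: "X \<subseteq> Con F" and sub: "Cg i \<subseteq> conJoin F X"
    have "(i,bot) \<in> conJoin F X" using sub Cgi[of i] by (rule subsetD)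
    then have "(i,bot) \<in> (\<Union>X)\<^sup>*" unfolding conJoin_rtrancl[OF X] .
    then have "\<exists>Y\<subseteq>X. finite Y \<and> (i,bot) \<in> (\<Union>Y)\<^sup>*" by (rule rtrancl_finite)
    then obtain Y where Y: "Y \<subseteq> X" "finite Y" "(i,bot) \<in> (\<Union>Y)\<^sup>*" by blast
    have "Y \<subseteq> Con F" using Y(1) X by (rule subset_trans)
    then have CY: "conJoin F Y = (\<Union>Y)\<^sup>*" by (rule conJoin_rtrancl)
    have "(i,bot) \<in> conJoin F Y" unfolding CY by (rule Y(3))
    then have "\<Union>{{(i,bot)}} \<subseteq> conJoin F Y" by simp
    then have "conJoin F {{(i,bot)}} \<subseteq> conJoin F Y" by (rule conJoin_least[OF conJoin_in])
    then have "Cg i \<subseteq> conJoin F Y" unfolding Cg_def .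
    then show "\<exists>Y\<subseteq>X. finite Y \<and> Cg i \<subseteq> conJoin F Y" using Y(1,2) by blast
  qed
  define Y where "Y = Cg ` zero_class x"
  have YC: "Y \<subseteq> Con F" using CgC Y_def by auto
  have EQ: "eta x = conJoin F Y"
  proof
    show "conJoin F Y \<subseteq> eta x"
    proof (rule conJoin_least[OF eta_Con[OF ops x]])
      show "\<Union>Y \<subseteq> eta x"
      proof
        fix p assume "p \<in> \<Union>Y"
        then obtain i where i: "i \<in> zero_class x" "p \<in> Cg i" using Y_def by auto
        have "(i,bot) \<in> eta x" unfolding eta_def mem_Collect_eq case_prod_conv
          by (rule bexI[where x=i, OF _ i(1)]) simp
        then have "Cg i \<subseteq> eta x" unfolding Cg_def
          by (intro conJoin_least eta_Con[OF ops x]) auto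
        then show "p \<in> eta x" using i by blast
      qed
    qed
    show "eta x \<subseteq> conJoin F Y"
    proof safe
      fix a b assume "(a,b) \<in> eta x"
      then obtain i where i: "i \<in> zero_class x" "sup a i = sup b i" by (auto simp: eta_def)
      have c1: "(sup a bot, sup a i) \<in> Cg i" by (rule Con_sup[OF CgC Con_refl[OF CgC] Con_sym[OF CgC Cgi]])
      have c2: "(sup b i, sup b bot) \<in> Cg i" by (rule Con_sup[OF CgC Con_refl[OF CgC] Cgi])
      have d1: "(a, sup b i) \<in> Cg i" using c1 i(2) by simp
      have d2: "(sup b i, b) \<in> Cg i" using c2 by simp
      have ab: "(a,b) \<in> Cg i" by (rule Con_trans[OF CgC d1 d2])
      have "Cg i \<in> Y" using i(1) Y_def by blast
      then show "(a,b) \<in> conJoin F Y" using conJoin_upper[of Y F] ab by blast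
    qed
  qed
  have Ysub: "Y \<subseteq> eta ` Con F \<inter> {\<theta>. con_compact F \<theta>}"
  proof
    fix t assume "t \<in> Y"
    then obtain i where t: "t = Cg i" using Y_def by blast
    have "t \<in> eta ` Con F" using t Cg_eta[of i] CgC[of i] by (metis image_eqI)
    moreover have "con_compact F t" using t Cg_comp by simp
    ultimately show "t \<in> eta ` Con F \<inter> {\<theta>. con_compact F \<theta>}" by simp
  qed
  show "\<exists>Y. eta x = conJoin F Y \<and> Y \<subseteq> eta ` Con F \<inter> {\<theta>. con_compact F \<theta>}"
    by (intro exI[of _ Y] conjI EQ Ysub)
next
  fix Y assume Y: "Y \<subseteq> eta ` Con F \<inter> {\<theta>. con_compact F \<theta>}"
  have YC: "Y \<subseteq> Con F" using Y eta_Con[OF ops] by blast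
  define J where "J = conJoin F Y"
  have JC: "J \<in> Con F" unfolding J_def by (rule conJoin_in)
  have "eta J = J"
  proof
    show "eta J \<subseteq> J" using eta_le JC by blast
    have UJ: "\<Union>Y \<subseteq> eta J"
    proof
      fix p assume "p \<in> \<Union>Y"
      then obtain t where t: "t \<in> Y" "p \<in> t" by blast
      then obtain x' where x': "x' \<in> Con F" "t = eta x'" using Y by blast
      have "t \<subseteq> J" using conJoin_upper[of Y F] t(1) unfolding J_def by blast
      then have "eta t \<subseteq> eta J" by (rule eta_mono)
      moreover have "eta t = t" unfolding x'(2) by (rule eta_zc[OF zc_eta[OF x'(1)]])
      ultimately show "p \<in> eta J" using t by blast
    qed
    have "conJoin F Y \<subseteq> eta J" by (rule conJoin_least[OF eta_Con[OF ops JC] UJ])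
    then show "J \<subseteq> eta J" using J_def by simp
  qed
  then have "J \<in> eta ` Con F" using JC by (metis image_eqI)
  then show "conJoin F Y \<in> eta ` Con F" using J_def by simp
qed

theorem theorem5p5:
  fixes F :: "('a::{semilattice_sup,order_bot} \<Rightarrow> 'a) set"
  assumes "is_operator_set F"
  shows "(\<forall>x \<in> Con F. eta x \<subseteq> x)
    \<and> (\<forall>x \<in> Con F. \<forall>y \<in> Con F. y \<subseteq> x \<longrightarrow> eta y \<subseteq> eta x)
    \<and> (\<forall>x \<in> Con F. eta (eta x) = eta x)
    \<and> eta UNIV = UNIV
    \<and> (\<forall>X u. X \<subseteq> Con F \<longrightarrow> X \<noteq> {} \<longrightarrow> (\<forall>x \<in> X. eta x = u) \<longrightarrow> eta (conJoin F X) = u)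
    \<and> (\<forall>x \<in> Con F. \<forall>y \<in> Con F. \<forall>z \<in> Con F.
         conJoin F {eta x, y \<inter> z} = conJoin F {eta x, y} \<inter> conJoin F {eta x, z})
    \<and> eta ` Con F = {conJoin F Y | Y. Y \<subseteq> eta ` Con F \<inter> {\<theta>. con_compact F \<theta>}}"
proof (intro conjI)
  show "\<forall>x \<in> Con F. eta x \<subseteq> x" using eta_le by blast
  show "\<forall>x \<in> Con F. \<forall>y \<in> Con F. y \<subseteq> x \<longrightarrow> eta y \<subseteq> eta x" using eta_mono by blast
qed (rule L3 L4 L5[OF assms] L6[OF assms] L7[OF assms])+

end
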